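(* Let $(\mathbb{P},\le,f)$ be a forcing property for $\mathcal{L}_A$. Every condition $p\in\mathbb{P}$ belongs to a generic set.
   Context: $\mathcal{L}$ is a countable continuous signature; formulas of $\mathcal{L}_{\omega_1,\omega}$ are built from atomic formulas using $\neg$, $\tfrac12$, $\dotplus$, countable conjunctions $\bigwedge$ and $\inf_x$. $\mathcal{L}_A$ is a countable fragment, $C=\{c_i:i<\omega\}$ new constants, $\mathcal{L}_A(C)$ the smallest countable fragment of $\mathcal{L}_{\omega_1,\omega}(C)$ containing $\mathcal{L}_A$ (a countable set), $\mathcal{L}_A^s(C)$ its sentences, $\mathcal{L}_A^{as}(C)$ its atomic sentences, $\mathcal{T}(C)$ closed terms. A forcing property $(\mathbb{P},\le,f)$: poset with $f_p\colon\mathcal{L}_A^{as}(C)\to[0,1]$ such that (1) $p\le q\Rightarrow f_p\le f_q$; (2) for every $p$, $\varepsilon>0$, $\tau,\sigma\in\mathcal{T}(C)$, atomic $\varphi(x)$ there are $q\le p$, $c\in C$ with $f_q(d(\tau,c))<\varepsilon$, $f_q(d(\tau,\sigma))<f_p(d(\sigma,\tau))+\varepsilon$, and if $f_p(d(\tau,\sigma))<\delta_{\varphi,x}(\varepsilon)$ then $f_q(\varphi(\sigma))<f_p(\varphi(\tau))+\varepsilon$. $F_p$: $f_p$ on atomics; $F_p(\neg\varphi)=1-\inf_{q\le p}F_q(\varphi)$; $F_p(\tfrac12\varphi)=\tfrac12F_p(\varphi)$; $F_p(\varphi\dotplus\psi)=\min(F_p(\varphi)+F_p(\psi),1)$; $F_p(\bigwedge\Phi)=\inf_{\varphi\in\Phi}F_p(\varphi)$;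 $F_p(\inf_x\varphi)=\inf_{c\in C}F_p(\varphi(c))$. A nonempty $G\subseteq\mathbb{P}$ is generic if it is downward directed (any two elements have a common lower bound in $G$), upward closed, and for every $\varphi\in\mathcal{L}_A^s(C)$ and $r>1$ there is $p\in G$ with $F_p(\varphi)+F_p(\neg\varphi)<r$. *)

theory Defs
  imports Complex_Main "HOL-Library.Countable" "HOL-Library.Countable_Set"
begin

text \<open>A continuous signature: arities of function symbols ('f) and predicate
  symbols ('r), together with moduli of uniform continuity, one per argument place.
  Constants of the signature are 0-ary function symbols.\<close>

record ('f, 'r) csig =
  farity :: "'f \<Rightarrow> nat"
  rarity :: "'r \<Rightarrow> nat"
  fmod   :: "'f \<Rightarrow> nat \<Rightarrow> real \<Rightarrow> real"
  rmod   :: "'r \<Rightarrow> nat \<Rightarrow> real \<Rightarrow> real"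

definition valid_sig :: "('f, 'r) csig \<Rightarrow> bool" where
  "valid_sig S \<longleftrightarrow>
     (\<forall>g i e. i < farity S g \<and> 0 < e \<longrightarrow> 0 < fmod S g i e) \<and>
     (\<forall>R i e. i < rarity S R \<and> 0 < e \<longrightarrow> 0 < rmod S R i e)"

text \<open>Terms: variables, the new constants c_i (Cst i), and applications.\<close>
datatype 'f trm = Var nat | Cst nat | App 'f "'f trm list"

datatype ('f, 'r) atom = Dist "'f trm" "'f trm" | Rel 'r "'f trm list"

text \<open>Formulas: atomic, negation, one half, truncated sum, countable
  conjunction (indexed by nat), and inf over a variable.\<close>
datatype ('f, 'r) frm =
    Atom "('f, 'r) atom"
  | Neg "('f, 'r) frm"
  | Half "('f, 'r) frm"
  | Plus "('f, 'r) frm" "('f, 'r) frm"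
  | Conj "nat \<Rightarrow> ('f, 'r) frm"
  | Inf nat "('f, 'r) frm"

primrec fvt :: "'f trm \<Rightarrow> nat set" where
  "fvt (Var n) = {n}"
| "fvt (Cst n) = {}"
| "fvt (App g ts) = \<Union> (set (map fvt ts))"

primrec fva :: "('f, 'r) atom \<Rightarrow> nat set" where
  "fva (Dist t u) = fvt t \<union> fvt u"
| "fva (Rel R ts) = \<Union> (fvt ` set ts)"

primrec fv :: "('f, 'r) frm \<Rightarrow> nat set" where
  "fv (Atom a) = fva a"
| "fv (Neg \<phi>) = fv \<phi>"
| "fv (Half \<phi>) = fv \<phi>"
| "fv (Plus \<phi> \<psi>) = fv \<phi> \<union> fv \<psi>"
| "fv (Conj \<Phi>) = (\<Union>n. fv (\<Phi> n))"
| "fv (Inf x \<phi>) = fv \<phi> - {x}"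

text \<open>Well-formedness; the flag says whether the new constants C may occur.\<close>
primrec wft :: "('f, 'r) csig \<Rightarrow> bool \<Rightarrow> 'f trm \<Rightarrow> bool" where
  "wft S b (Var n) = True"
| "wft S b (Cst n) = b"
| "wft S b (App g ts) = (length ts = farity S g \<and> list_all (wft S b) ts)"

primrec wfa :: "('f, 'r) csig \<Rightarrow> bool \<Rightarrow> ('f, 'r) atom \<Rightarrow> bool" where
  "wfa S b (Dist t u) = (wft S b t \<and> wft S b u)"
| "wfa S b (Rel R ts) = (length ts = rarity S R \<and> list_all (wft S b) ts)"

primrec wff :: "('f, 'r) csig \<Rightarrow> bool \<Rightarrow> ('f, 'r) frm \<Rightarrow> bool" where
  "wff S b (Atom a) = wfa S b a"
| "wff S b (Neg \<phi>) = wff S b \<phi>"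
| "wff S b (Half \<phi>) = wff S b \<phi>"
| "wff S b (Plus \<phi> \<psi>) = (wff S b \<phi> \<and> wff S b \<psi>)"
| "wff S b (Conj \<Phi>) = ((\<forall>n. wff S b (\<Phi> n)) \<and> finite (\<Union>n. fv (\<Phi> n)))"
| "wff S b (Inf x \<phi>) = wff S b \<phi>"

primrec subst_trm :: "(nat \<Rightarrow> 'f trm) \<Rightarrow> 'f trm \<Rightarrow> 'f trm" where
  "subst_trm s (Var n) = s n"
| "subst_trm s (Cst n) = Cst n"
| "subst_trm s (App g ts) = App g (map (subst_trm s) ts)"

primrec subst_atom :: "(nat \<Rightarrow> 'f trm) \<Rightarrow> ('f, 'r) atom \<Rightarrow> ('f, 'r) atom" where
  "subst_atom s (Dist t u) = Dist (subst_trm s t) (subst_trm s u)"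
| "subst_atom s (Rel R ts) = Rel R (map (subst_trm s) ts)"

primrec substf :: "(nat \<Rightarrow> 'f trm) \<Rightarrow> ('f, 'r) frm \<Rightarrow> ('f, 'r) frm" where
  "substf s (Atom a) = Atom (subst_atom s a)"
| "substf s (Neg \<phi>) = Neg (substf s \<phi>)"
| "substf s (Half \<phi>) = Half (substf s \<phi>)"
| "substf s (Plus \<phi> \<psi>) = Plus (substf s \<phi>) (substf s \<psi>)"
| "substf s (Conj \<Phi>) = Conj (\<lambda>n. substf s (\<Phi> n))"
| "substf s (Inf x \<phi>) = Inf x (substf (s(x := Var x)) \<phi>)"

primrec freefor :: "'f trm \<Rightarrow> nat \<Rightarrow> ('f, 'r) frm \<Rightarrow> bool" where
  "freefor t x (Atom a) = True"
| "freefor t x (Neg \<phi>) = freefor t x \<phi>"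
| "freefor t x (Half \<phi>) = freefor t x \<phi>"
| "freefor t x (Plus \<phi> \<psi>) = (freefor t x \<phi> \<and> freefor t x \<psi>)"
| "freefor t x (Conj \<Phi>) = (\<forall>n. freefor t x (\<Phi> n))"
| "freefor t x (Inf y \<phi>) = (y = x \<or> x \<notin> fv \<phi> \<or> (y \<notin> fvt t \<and> freefor t x \<phi>))"

text \<open>A fragment of L_{omega1,omega} (b = False) or of L_{omega1,omega}(C) (b = True):
  a set of formulas containing all atomic formulas, closed under the finitary
  connectives, under inf_x, under subformulas and under substitution of terms.\<close>
definition is_fragment :: "('f, 'r) csig \<Rightarrow> bool \<Rightarrow> ('f, 'r) frm set \<Rightarrow> bool" where
  "is_fragment S b F \<longleftrightarrow>
     F \<subseteq> {\<phi>. wff S b \<phi>} \<and>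
     (\<forall>a. wfa S b a \<longrightarrow> Atom a \<in> F) \<and>
     (\<forall>\<phi>\<in>F. Neg \<phi> \<in> F \<and> Half \<phi> \<in> F \<and> (\<forall>x. Inf x \<phi> \<in> F)) \<and>
     (\<forall>\<phi>\<in>F. \<forall>\<psi>\<in>F. Plus \<phi> \<psi> \<in> F) \<and>
     (\<forall>\<phi>. Neg \<phi> \<in> F \<longrightarrow> \<phi> \<in> F) \<and>
     (\<forall>\<phi>. Half \<phi> \<in> F \<longrightarrow> \<phi> \<in> F) \<and>
     (\<forall>\<phi> \<psi>. Plus \<phi> \<psi> \<in> F \<longrightarrow> \<phi> \<in> F \<and> \<psi> \<in> F) \<and>
     (\<forall>\<Phi>. Conj \<Phi> \<in> F \<longrightarrow> (\<forall>n. \<Phi> n \<in> F)) \<and>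
     (\<forall>x \<phi>. Inf x \<phi> \<in> F \<longrightarrow> \<phi> \<in> F) \<and>
     (\<forall>\<phi>\<in>F. \<forall>x t. wft S b t \<and> freefor t x \<phi> \<longrightarrow> substf (Var(x := t)) \<phi> \<in> F)"

definition countable_fragment :: "('f, 'r) csig \<Rightarrow> ('f, 'r) frm set \<Rightarrow> bool" where
  "countable_fragment S LA \<longleftrightarrow> is_fragment S False LA \<and> countable LA"

definition LAC :: "('f, 'r) csig \<Rightarrow> ('f, 'r) frm set \<Rightarrow> ('f, 'r) frm set" where
  "LAC S LA = \<Inter> {F. is_fragment S True F \<and> countable F \<and> LA \<subseteq> F}"

definition LAC_sent :: "('f, 'r) csig \<Rightarrow> ('f, 'r) frm set \<Rightarrow> ('f, 'r) frm set" where
  "LAC_sent S LA = {\<phi> \<in> LAC S LA. fv \<phi> = {}}"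

definition LAC_atsent :: "('f, 'r) csig \<Rightarrow> ('f, 'r) frm set \<Rightarrow> ('f, 'r) atom set" where
  "LAC_atsent S LA = {a. Atom a \<in> LAC S LA \<and> fva a = {}}"

definition closed_terms :: "('f, 'r) csig \<Rightarrow> 'f trm set" where
  "closed_terms S = {t. wft S True t \<and> fvt t = {}}"

section \<open>Moduli of uniform continuity delta_{phi,x}\<close>

primrec tdelta :: "('f, 'r) csig \<Rightarrow> 'f trm \<Rightarrow> nat \<Rightarrow> real \<Rightarrow> real" where
  "tdelta S (Var n) x = (\<lambda>e. e)"
| "tdelta S (Cst n) x = (\<lambda>e. e)"
| "tdelta S (App g ts) x =
     (let ds = map (\<lambda>t. tdelta S t x) ts in
      (\<lambda>e. foldr min (map (\<lambda>i. (ds ! i) (fmod S g i e)) [0..<length ts]) e))"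

primrec adelta :: "('f, 'r) csig \<Rightarrow> ('f, 'r) atom \<Rightarrow> nat \<Rightarrow> real \<Rightarrow> real" where
  "adelta S (Dist t u) x e = min (tdelta S t x (e / 2)) (tdelta S u x (e / 2))"
| "adelta S (Rel R ts) x e =
     foldr min (map (\<lambda>i. tdelta S (ts ! i) x (rmod S R i e)) [0..<length ts]) e"

definition forcing_property ::
  "('f, 'r) csig \<Rightarrow> ('f, 'r) frm set \<Rightarrow> 'p set \<Rightarrow> ('p \<Rightarrow> 'p \<Rightarrow> bool)
     \<Rightarrow> ('p \<Rightarrow> ('f, 'r) atom \<Rightarrow> real) \<Rightarrow> bool" where
  "forcing_property S LA P le f \<longleftrightarrow>
     (\<forall>p\<in>P. le p p) \<and>
     (\<forall>p\<in>P. \<forall>q\<in>P. le p q \<and> le q p \<longrightarrow> p = q) \<and>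
     (\<forall>p\<in>P. \<forall>q\<in>P. \<forall>r\<in>P. le p q \<and> le q r \<longrightarrow> le p r) \<and>
     (\<forall>p\<in>P. \<forall>a\<in>LAC_atsent S LA. 0 \<le> f p a \<and> f p a \<le> 1) \<and>
     (\<forall>p\<in>P. \<forall>q\<in>P. le p q \<longrightarrow> (\<forall>a\<in>LAC_atsent S LA. f p a \<le> f q a)) \<and>
     (\<forall>p\<in>P. \<forall>e>0. \<forall>\<tau>\<in>closed_terms S. \<forall>\<sigma>\<in>closed_terms S. \<forall>a x.
        Atom a \<in> LAC S LA \<and> fva a \<subseteq> {x} \<longrightarrow>
        (\<exists>q\<in>P. \<exists>c. le q p \<and>
           f q (Dist \<tau> (Cst c)) < e \<and>
           f q (Dist \<tau> \<sigma>) < f p (Dist \<sigma> \<tau>) + e \<and>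
           (f p (Dist \<tau> \<sigma>) < adelta S a x e \<longrightarrow>
              f q (subst_atom (Var(x := \<sigma>)) a) < f p (subst_atom (Var(x := \<tau>)) a) + e)))"

text \<open>The forcing values F_p, defined with an assignment s of terms to the
  free variables (F_p(phi) is Fs with the identity assignment Var); the clause
  for inf_x realises F_p(inf_x phi) = inf_c F_p(phi(c)).\<close>
primrec Fs :: "'p set \<Rightarrow> ('p \<Rightarrow> 'p \<Rightarrow> bool) \<Rightarrow> ('p \<Rightarrow> ('f, 'r) atom \<Rightarrow> real)
     \<Rightarrow> ('f, 'r) frm \<Rightarrow> (nat \<Rightarrow> 'f trm) \<Rightarrow> 'p \<Rightarrow> real" where
  "Fs P le f (Atom a) s p = f p (subst_atom s a)"
| "Fs P le f (Neg \<phi>) s p = 1 - (INF q\<in>{q\<in>P. le q p}. Fs P le f \<phi> s q)"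
| "Fs P le f (Half \<phi>) s p = Fs P le f \<phi> s p / 2"
| "Fs P le f (Plus \<phi> \<psi>) s p = min (Fs P le f \<phi> s p + Fs P le f \<psi> s p) 1"
| "Fs P le f (Conj \<Phi>) s p = (INF n. Fs P le f (\<Phi> n) s p)"
| "Fs P le f (Inf x \<phi>) s p = (INF c. Fs P le f \<phi> (s(x := Cst c)) p)"

definition FF :: "'p set \<Rightarrow> ('p \<Rightarrow> 'p \<Rightarrow> bool) \<Rightarrow> ('p \<Rightarrow> ('f, 'r) atom \<Rightarrow> real)
     \<Rightarrow> 'p \<Rightarrow> ('f, 'r) frm \<Rightarrow> real" where
  "FF P le f p \<phi> = Fs P le f \<phi> Var p"

definition generic ::
  "('f, 'r) csig \<Rightarrow> ('f, 'r) frm set \<Rightarrow> 'p set \<Rightarrow> ('p \<Rightarrow> 'p \<Rightarrow> bool)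
     \<Rightarrow> ('p \<Rightarrow> ('f, 'r) atom \<Rightarrow> real) \<Rightarrow> 'p set \<Rightarrow> bool" where
  "generic S LA P le f G \<longleftrightarrow>
     G \<noteq> {} \<and> G \<subseteq> P \<and>
     (\<forall>p\<in>G. \<forall>q\<in>G. \<exists>r\<in>G. le r p \<and> le r q) \<and>
     (\<forall>p\<in>G. \<forall>q\<in>P. le p q \<longrightarrow> q \<in> G) \<and>
     (\<forall>\<phi>\<in>LAC_sent S LA. \<forall>r>1. \<exists>p\<in>G. FF P le f p \<phi> + FF P le f p (Neg \<phi>) < r)"

end

theory Submission
  imports Defs
begin

instance trm :: (countable) countable by countable_datatype
instance atom :: (countable, countable) countable by countable_datatype

lemma finite_fvt: "finite (fvt t)"
  by (induction t) auto

lemma fvt_subst: "fvt (subst_trm s t) = (\<Union>v\<in>fvt t. fvt (s v))"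
  by (induction t) auto

lemma fva_subst: "fva (subst_atom s a) = (\<Union>v\<in>fva a. fvt (s v))"
  by (cases a) (auto simp: fvt_subst)

lemma subst_trm_comp: "subst_trm s (subst_trm t u) = subst_trm (\<lambda>v. subst_trm s (t v)) u"
  by (induction u) auto

lemma subst_atom_comp: "subst_atom s (subst_atom t a) = subst_atom (\<lambda>v. subst_trm s (t v)) a"
  by (cases a) (auto simp: subst_trm_comp)

lemma wft_mono: "wft S False t \<Longrightarrow> wft S True t"
  by (induction t) (auto simp: list_all_iff)

lemma wfa_mono: "wfa S False a \<Longrightarrow> wfa S True a"
  by (cases a) (auto simp: list_all_iff wft_mono)

lemma wff_mono: "wff S False \<phi> \<Longrightarrow> wff S True \<phi>"
  by (induction \<phi>) (auto simp: wfa_mono)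

lemma wft_subst: "wft S b t \<Longrightarrow> (\<forall>v. wft S b (s v)) \<Longrightarrow> wft S b (subst_trm s t)"
  by (induction t) (auto simp: list_all_iff)

lemma wfa_subst: "wfa S b a \<Longrightarrow> (\<forall>v. wft S b (s v)) \<Longrightarrow> wfa S b (subst_atom s a)"
  by (cases a) (auto simp: list_all_iff wft_subst)

lemma fv_substf: "fv (substf s \<phi>) \<subseteq> (\<Union>v\<in>fv \<phi>. fvt (s v))"
proof (induction \<phi> arbitrary: s)
  case (Atom a) then show ?case by (simp add: fva_subst)
next
  case (Inf x \<phi>)
  have "fv (substf (s(x := Var x)) \<phi>) \<subseteq> (\<Union>v\<in>fv \<phi>. fvt ((s(x := Var x)) v))" by (rule Inf.IH)
  also have "\<dots> \<subseteq> insert x (\<Union>v\<in>fv \<phi> - {x}. fvt (s v))"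
  proof
    fix y assume "y \<in> (\<Union>v\<in>fv \<phi>. fvt ((s(x := Var x)) v))"
    then obtain v where v: "v \<in> fv \<phi>" "y \<in> fvt ((s(x := Var x)) v)" by blast
    show "y \<in> insert x (\<Union>v\<in>fv \<phi> - {x}. fvt (s v))"
    proof (cases "v = x")
      case True then show ?thesis using v by simp
    next
      case False then show ?thesis using v by auto
    qed
  qed
  finally show ?case by (simp only: fv.simps substf.simps) blast
qed fastforce+

lemma wff_subst: "wff S b \<phi> \<Longrightarrow> (\<forall>v. wft S b (s v)) \<Longrightarrow> wff S b (substf s \<phi>)"
proof (induction \<phi> arbitrary: s)
  case (Atom a) then show ?case by (simp add: wfa_subst)
next
  case (Conj \<Phi>)
  have "(\<Union>n. fv (substf s (\<Phi> n))) \<subseteq> (\<Union>v\<in>(\<Union>n. fv (\<Phi> n)). fvt (s v))"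
    using fv_substf[of s] by blast
  moreover have "finite (\<Union>v\<in>(\<Union>n. fv (\<Phi> n)). fvt (s v))"
  proof -
    have fin: "finite (\<Union>n. fv (\<Phi> n))" using Conj.prems by simp
    show ?thesis by (rule finite_UN_I[OF fin]) (rule finite_fvt)
  qed
  ultimately show ?case using Conj by (auto intro: finite_subset)
next
  case (Inf x \<phi>) then show ?case by simp
qed auto

primrec subs :: "('f, 'r) frm \<Rightarrow> ('f, 'r) frm set" where
  "subs (Atom a) = {}"
| "subs (Neg \<phi>) = {\<phi>}"
| "subs (Half \<phi>) = {\<phi>}"
| "subs (Plus \<phi> \<psi>) = {\<phi>, \<psi>}"
| "subs (Conj \<Phi>) = range \<Phi>"
| "subs (Inf x \<phi>) = {\<phi>}"

lemma countable_subs: "countable (subs \<phi>)"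
  by (cases \<phi>) auto

lemma wff_subs: "wff S b \<phi> \<Longrightarrow> \<psi> \<in> subs \<phi> \<Longrightarrow> wff S b \<psi>"
  by (cases \<phi>) auto

definition step :: "('f, 'r) csig \<Rightarrow> ('f, 'r) frm set \<Rightarrow> ('f, 'r) frm set" where
  "step S X = X \<union> Atom ` {a. wfa S True a} \<union> Neg ` X \<union> Half ` X \<union> (\<Union>x. Inf x ` X)
     \<union> (\<Union>\<phi>\<in>X. Plus \<phi> ` X) \<union> (\<Union>\<phi>\<in>X. subs \<phi>)
     \<union> (\<lambda>(\<phi>, x, t). substf (Var(x := t)) \<phi>) ` {(\<phi>, x, t). \<phi> \<in> X \<and> wft S True t \<and> freefor t x \<phi>}"

primrec stage :: "('f, 'r) csig \<Rightarrow> ('f, 'r) frm set \<Rightarrow> nat \<Rightarrow> ('f, 'r) frm set" where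
  "stage S LA 0 = LA"
| "stage S LA (Suc n) = step S (stage S LA n)"

lemma countable_step:
  fixes X :: "('f::countable, 'r::countable) frm set"
  assumes "countable X" shows "countable (step S X)"
proof -
  have "{(\<phi>, x, t). \<phi> \<in> X \<and> wft S True t \<and> freefor t x \<phi>} \<subseteq> X \<times> (UNIV :: nat set) \<times> (UNIV :: 'f trm set)"
    by auto
  moreover have "countable (X \<times> (UNIV :: nat set) \<times> (UNIV :: 'f trm set))" using assms by simp
  ultimately have "countable {(\<phi>, x, t). \<phi> \<in> X \<and> wft S True t \<and> freefor t x \<phi>}"
    by (rule countable_subset)
  moreover have "countable (Atom ` {a. wfa S True a} :: ('f, 'r) frm set)" by simp
  ultimately show ?thesis using assms unfolding step_def
    by (auto simp: countable_subs)
qed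

lemma countable_stage:
  fixes LA :: "('f::countable, 'r::countable) frm set"
  shows "countable LA \<Longrightarrow> countable (stage S LA n)"
  by (induction n) (auto simp: countable_step)

lemma stage_mono: "m \<le> n \<Longrightarrow> stage S LA m \<subseteq> stage S LA n"
  by (induction n rule: dec_induct) (auto simp: step_def)

lemma wff_step: "X \<subseteq> {\<phi>. wff S True \<phi>} \<Longrightarrow> step S X \<subseteq> {\<phi>. wff S True \<phi>}"
  unfolding step_def
  apply (auto simp: wff_subs)
  subgoal for \<phi> x t by (rule wff_subst) auto
  done

lemma wff_stage: "LA \<subseteq> {\<phi>. wff S False \<phi>} \<Longrightarrow> stage S LA n \<subseteq> {\<phi>. wff S True \<phi>}"
  by (induction n) (auto simp: wff_mono wff_step)

lemma fragment_Cl: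
  assumes "LA \<subseteq> {\<phi>. wff S False \<phi>}"
  shows "is_fragment S True (\<Union>n. stage S LA n)"
proof -
  let ?C = "\<Union>n. stage S LA n"
  have up: "\<phi> \<in> stage S LA n \<Longrightarrow> \<phi> \<in> stage S LA (Suc n)" for \<phi> n
    by (auto simp: step_def)
  have sub: "\<phi> \<in> stage S LA n \<Longrightarrow> \<psi> \<in> subs \<phi> \<Longrightarrow> \<psi> \<in> ?C" for \<phi> \<psi> n
    by (rule UN_I[of "Suc n"]) (auto simp: step_def)
  show ?thesis unfolding is_fragment_def
  proof (intro conjI)
    show "?C \<subseteq> {\<phi>. wff S True \<phi>}" using wff_stage[OF assms] by blast
    show "\<forall>a. wfa S True a \<longrightarrow> Atom a \<in> ?C"
      by (intro allI impI UN_I[of "Suc 0"]) (auto simp: step_def)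
    show "\<forall>\<phi>\<in>?C. Neg \<phi> \<in> ?C \<and> Half \<phi> \<in> ?C \<and> (\<forall>x. Inf x \<phi> \<in> ?C)"
    proof
      fix \<phi> assume "\<phi> \<in> ?C" then obtain n where "\<phi> \<in> stage S LA n" by blast
      then have "Neg \<phi> \<in> stage S LA (Suc n) \<and> Half \<phi> \<in> stage S LA (Suc n) \<and> (\<forall>x. Inf x \<phi> \<in> stage S LA (Suc n))"
        by (auto simp: step_def)
      then show "Neg \<phi> \<in> ?C \<and> Half \<phi> \<in> ?C \<and> (\<forall>x. Inf x \<phi> \<in> ?C)" by blast
    qed
    show "\<forall>\<phi>\<in>?C. \<forall>\<psi>\<in>?C. Plus \<phi> \<psi> \<in> ?C"
    proof (intro ballI)
      fix \<phi> \<psi> assume "\<phi> \<in> ?C" "\<psi> \<in> ?C"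
      then obtain n m where "\<phi> \<in> stage S LA n" "\<psi> \<in> stage S LA m" by blast
      then have "\<phi> \<in> stage S LA (max n m)" "\<psi> \<in> stage S LA (max n m)"
        using stage_mono[of n "max n m" S LA] stage_mono[of m "max n m" S LA] by auto
      then have "Plus \<phi> \<psi> \<in> stage S LA (Suc (max n m))"
        by (auto simp: step_def)
      then show "Plus \<phi> \<psi> \<in> ?C" by blast
    qed
    show "\<forall>\<phi>. Neg \<phi> \<in> ?C \<longrightarrow> \<phi> \<in> ?C" using sub by fastforce
    show "\<forall>\<phi>. Half \<phi> \<in> ?C \<longrightarrow> \<phi> \<in> ?C" using sub by fastforce
    show "\<forall>\<phi> \<psi>. Plus \<phi> \<psi> \<in> ?C \<longrightarrow> \<phi> \<in> ?C \<and> \<psi> \<in> ?C" using sub by fastforce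
    show "\<forall>\<Phi>. Conj \<Phi> \<in> ?C \<longrightarrow> (\<forall>n. \<Phi> n \<in> ?C)" using sub by fastforce
    show "\<forall>x \<phi>. Inf x \<phi> \<in> ?C \<longrightarrow> \<phi> \<in> ?C" using sub by fastforce
    show "\<forall>\<phi>\<in>?C. \<forall>x t. wft S True t \<and> freefor t x \<phi> \<longrightarrow> substf (Var(x := t)) \<phi> \<in> ?C"
    proof (intro ballI allI impI)
      fix \<phi> x t assume "\<phi> \<in> ?C" "wft S True t \<and> freefor t x \<phi>"
      then obtain n where "\<phi> \<in> stage S LA n" by blast
      with \<open>wft S True t \<and> freefor t x \<phi>\<close> show "substf (Var(x := t)) \<phi> \<in> ?C"
      proof -
        have "substf (Var(x := t)) \<phi> \<in> stage S LA (Suc n)"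
          using \<open>\<phi> \<in> stage S LA n\<close> \<open>wft S True t \<and> freefor t x \<phi>\<close>
          unfolding stage.simps step_def by (intro UnI2) force
        then show ?thesis by blast
      qed
    qed
  qed
qed

lemma countable_LAC:
  fixes S :: "('f::countable, 'r::countable) csig"
  assumes "countable_fragment S LA"
  shows "countable (LAC S LA)"
proof -
  have LA: "LA \<subseteq> {\<phi>. wff S False \<phi>}" "countable LA"
    using assms by (auto simp: countable_fragment_def is_fragment_def)
  have "LAC S LA \<subseteq> (\<Union>n. stage S LA n)"
    unfolding LAC_def
    by (rule Inter_lower) (auto simp: fragment_Cl[OF LA(1)] countable_stage[OF LA(2)]
        intro: UN_I[of 0])
  then show ?thesis by (rule countable_subset) (auto simp: countable_stage[OF LA(2)])
qed


lemma subst_trm_Var: "subst_trm Var t = t"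
  by (induction t) (auto intro: map_idI)

definition closedL :: "('f, 'r) frm set \<Rightarrow> bool" where
  "closedL L \<longleftrightarrow> (\<forall>\<phi>. Neg \<phi> \<in> L \<longrightarrow> \<phi> \<in> L) \<and> (\<forall>\<phi>. Half \<phi> \<in> L \<longrightarrow> \<phi> \<in> L) \<and>
     (\<forall>\<phi> \<psi>. Plus \<phi> \<psi> \<in> L \<longrightarrow> \<phi> \<in> L \<and> \<psi> \<in> L) \<and>
     (\<forall>\<Phi>. Conj \<Phi> \<in> L \<longrightarrow> (\<forall>n. \<Phi> n \<in> L)) \<and>
     (\<forall>x \<phi>. Inf x \<phi> \<in> L \<longrightarrow> \<phi> \<in> L) \<and>
     (\<forall>a x c. Atom a \<in> L \<longrightarrow> Atom (subst_atom (Var(x := Cst c)) a) \<in> L)"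

lemma closedL_frag: "is_fragment S True F \<Longrightarrow> closedL F"
  unfolding closedL_def is_fragment_def
  apply (elim conjE)
  apply (intro conjI)
       apply (assumption)+
  apply (intro allI impI)
  subgoal premises p for a x c
    using p(10)[rule_format, OF p(11), of "Cst c" x] by simp
  done

lemma closedL_Inter: assumes "\<forall>F\<in>Fam. closedL F" shows "closedL (\<Inter>Fam)"
  unfolding closedL_def
proof (intro conjI allI impI InterI)
  fix F
  assume F: "F \<in> Fam"
  then have c: "closedL F" using assms by blast
  { fix \<phi> assume "Neg \<phi> \<in> \<Inter>Fam" then show "\<phi> \<in> F" using F c unfolding closedL_def by blast }
  { fix \<phi> assume "Half \<phi> \<in> \<Inter>Fam" then show "\<phi> \<in> F" using F c unfolding closedL_def by blast }
  { fix \<phi> \<psi> assume "Plus \<phi> \<psi> \<in> \<Inter>Fam" then show "\<phi> \<in> F" using F c unfolding closedL_def by blast }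
  { fix \<phi> \<psi> assume "Plus \<phi> \<psi> \<in> \<Inter>Fam" then show "\<psi> \<in> F" using F c unfolding closedL_def by blast }
  { fix \<Phi> n assume "Conj \<Phi> \<in> \<Inter>Fam" then show "\<Phi> n \<in> F" using F c unfolding closedL_def by blast }
  { fix x \<phi> assume "Inf x \<phi> \<in> \<Inter>Fam" then show "\<phi> \<in> F" using F c unfolding closedL_def by blast }
  { fix a x c assume "Atom a \<in> \<Inter>Fam" then show "Atom (subst_atom (Var(x := Cst c)) a) \<in> F"
      using F \<open>closedL F\<close> unfolding closedL_def by blast }
qed

lemma closedL_LAC: "closedL (LAC S LA)"
  unfolding LAC_def by (rule closedL_Inter) (blast intro: closedL_frag)

definition adm :: "(nat \<Rightarrow> 'f trm) \<Rightarrow> bool" where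
  "adm s \<longleftrightarrow> finite {v. s v \<noteq> Var v} \<and> (\<forall>v. s v \<noteq> Var v \<longrightarrow> (\<exists>c. s v = Cst c))"

lemma closedL_atom: "Atom a \<in> L \<Longrightarrow> closedL L \<Longrightarrow> Atom (subst_atom (Var(x := Cst c)) a) \<in> L"
  unfolding closedL_def by blast

lemma closedL_sub:
  assumes "closedL L"
  shows "Neg \<phi> \<in> L \<Longrightarrow> \<phi> \<in> L" "Half \<phi> \<in> L \<Longrightarrow> \<phi> \<in> L"
    "Plus \<phi> \<psi> \<in> L \<Longrightarrow> \<phi> \<in> L" "Plus \<phi> \<psi> \<in> L \<Longrightarrow> \<psi> \<in> L"
    "Conj \<Phi> \<in> L \<Longrightarrow> \<Phi> n \<in> L" "Inf x \<phi> \<in> L \<Longrightarrow> \<phi> \<in> L"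
  using assms unfolding closedL_def by blast+

lemma atom_inst:
  assumes L: "closedL L" and a: "Atom a \<in> L"
  shows "finite D \<Longrightarrow> (\<forall>v\<in>D. \<exists>c. s v = Cst c) \<Longrightarrow> (\<forall>v. v \<notin> D \<longrightarrow> s v = Var v)
     \<Longrightarrow> Atom (subst_atom s a) \<in> L"
proof (induction D arbitrary: s rule: finite_induct)
  case empty
  then have "s = Var" by auto
  moreover have "subst_atom Var a = a"
  proof -
    have m: "map (subst_trm Var) ts = ts" for ts :: "'a trm list" by (induction ts) (simp_all add: subst_trm_Var)
    show ?thesis by (cases a) (simp_all add: m subst_trm_Var)
  qed
  ultimately show ?case using a by simp
next
  case (insert x D)
  define s' where "s' = s(x := Var x)"
  have "Atom (subst_atom s' a) \<in> L"
  proof (rule insert.IH)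
    show "\<forall>v\<in>D. \<exists>c. s' v = Cst c" using insert.prems(1) insert.hyps(2) by (auto simp: s'_def)
    show "\<forall>v. v \<notin> D \<longrightarrow> s' v = Var v" using insert.prems(2) by (auto simp: s'_def)
  qed
  moreover obtain c where c: "s x = Cst c" using insert.prems(1) by auto
  ultimately have "Atom (subst_atom (Var(x := Cst c)) (subst_atom s' a)) \<in> L"
    using L by (intro closedL_atom)
  moreover have "(\<lambda>v. subst_trm (Var(x := Cst c)) (s' v)) = s"
  proof
    fix v show "subst_trm (Var(x := Cst c)) (s' v) = s v"
    proof (cases "v = x")
      case True then show ?thesis by (simp add: s'_def c)
    next
      case False
      show ?thesis
      proof (cases "v \<in> D")
        case True then obtain d where "s v = Cst d" using insert.prems(1) by auto
        then show ?thesis using False by (simp add: s'_def)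
      next
        case nv: False then have "s v = Var v" using insert.prems(2) False by auto
        then show ?thesis using False by (simp add: s'_def)
      qed
    qed
  qed
  ultimately show ?case by (simp add: subst_atom_comp)
qed


lemma Fs_bound:
  assumes L: "closedL L"
    and fb: "\<forall>p\<in>P. \<forall>a. Atom a \<in> L \<and> fva a = {} \<longrightarrow> 0 \<le> f p a \<and> f p a \<le> 1"
    and refl: "\<forall>p\<in>P. le p p"
  shows "\<phi> \<in> L \<Longrightarrow> adm s \<Longrightarrow> fv \<phi> \<subseteq> {v. s v \<noteq> Var v} \<Longrightarrow> p \<in> P
     \<Longrightarrow> 0 \<le> Fs P le f \<phi> s p \<and> Fs P le f \<phi> s p \<le> 1"
proof (induction \<phi> arbitrary: s p)
  case (Atom a)
  let ?D = "{v. s v \<noteq> Var v}"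
  have "Atom (subst_atom s a) \<in> L"
    using Atom.prems(2) by (intro atom_inst[OF L Atom.prems(1), of ?D]) (auto simp: adm_def)
  moreover have "fva (subst_atom s a) = {}"
  proof -
    have "\<forall>v\<in>fva a. fvt (s v) = {}"
    proof
      fix v assume "v \<in> fva a"
      then have "s v \<noteq> Var v" using Atom.prems(3) by auto
      then obtain c where "s v = Cst c" using Atom.prems(2) by (auto simp: adm_def)
      then show "fvt (s v) = {}" by simp
    qed
    then show ?thesis by (simp add: fva_subst)
  qed
  ultimately show ?case using fb Atom.prems(4) by simp
next
  case (Neg \<phi>)
  have \<phi>L: "\<phi> \<in> L" by (rule closedL_sub(1)[OF L Neg.prems(1)])
  let ?A = "{q \<in> P. le q p}"
  have b: "0 \<le> Fs P le f \<phi> s q \<and> Fs P le f \<phi> s q \<le> 1" if "q \<in> ?A" for q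
    using Neg.IH[OF \<phi>L Neg.prems(2)] Neg.prems(3) that by auto
  have pA: "p \<in> ?A" using Neg.prems(4) refl by auto
  have ne: "?A \<noteq> {}" using pA by blast
  have bdd: "bdd_below ((\<lambda>q. Fs P le f \<phi> s q) ` ?A)"
    using b by (intro bdd_belowI2[of _ 0]) auto
  have "0 \<le> (INF q\<in>?A. Fs P le f \<phi> s q)"
    using ne b by (intro cINF_greatest) auto
  moreover have "(INF q\<in>?A. Fs P le f \<phi> s q) \<le> 1"
    using pA b bdd by (intro cINF_lower2[where x=p]) auto
  ultimately show ?case by simp
next
  case (Half \<phi>)
  have \<phi>L: "\<phi> \<in> L" by (rule closedL_sub(2)[OF L Half.prems(1)])
  have "0 \<le> Fs P le f \<phi> s p \<and> Fs P le f \<phi> s p \<le> 1"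
    using Half.IH[OF \<phi>L Half.prems(2)] Half.prems(3,4) by simp
  then show ?case by simp
next
  case (Plus \<phi> \<psi>)
  have \<phi>L: "\<phi> \<in> L" "\<psi> \<in> L" by (rule closedL_sub(3)[OF L Plus.prems(1)], rule closedL_sub(4)[OF L Plus.prems(1)])
  have "0 \<le> Fs P le f \<phi> s p \<and> Fs P le f \<phi> s p \<le> 1"
    using Plus.IH(1)[OF \<phi>L(1) Plus.prems(2)] Plus.prems(3,4) by simp
  moreover have "0 \<le> Fs P le f \<psi> s p \<and> Fs P le f \<psi> s p \<le> 1"
    using Plus.IH(2)[OF \<phi>L(2) Plus.prems(2)] Plus.prems(3,4) by simp
  ultimately show ?case by simp
next
  case (Conj \<Phi>)
  have \<phi>L: "\<Phi> n \<in> L" for n by (rule closedL_sub(5)[OF L Conj.prems(1)])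
  have b: "0 \<le> Fs P le f (\<Phi> n) s p \<and> Fs P le f (\<Phi> n) s p \<le> 1" for n
  proof -
    have "fv (\<Phi> n) \<subseteq> {v. s v \<noteq> Var v}" using Conj.prems(3) by auto
    then show ?thesis using Conj.IH[OF rangeI \<phi>L Conj.prems(2)] Conj.prems(4) by blast
  qed
  have bdd: "bdd_below (range (\<lambda>n. Fs P le f (\<Phi> n) s p))"
    using b by (intro bdd_belowI2[of _ 0]) auto
  have "0 \<le> (INF n. Fs P le f (\<Phi> n) s p)"
    using b by (intro cINF_greatest) auto
  moreover have "(INF n. Fs P le f (\<Phi> n) s p) \<le> 1"
    using b bdd by (intro cINF_lower2[where x=0]) auto
  ultimately show ?case by simp
next
  case (Inf x \<phi>)
  have \<phi>L: "\<phi> \<in> L" by (rule closedL_sub(6)[OF L Inf.prems(1)])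
  have b: "0 \<le> Fs P le f \<phi> (s(x := Cst c)) p \<and> Fs P le f \<phi> (s(x := Cst c)) p \<le> 1" for c
  proof (rule Inf.IH[OF \<phi>L _ _ Inf.prems(4)])
    have sub: "{v. (s(x := Cst c)) v \<noteq> Var v} \<subseteq> insert x {v. s v \<noteq> Var v}" by auto
    show "adm (s(x := Cst c))"
    proof -
      have "finite (insert x {v. s v \<noteq> Var v})" using Inf.prems(2) by (simp add: adm_def)
      then have "finite {v. (s(x := Cst c)) v \<noteq> Var v}" by (rule finite_subset[OF sub])
      then show ?thesis using Inf.prems(2) unfolding adm_def by auto
    qed
    show "fv \<phi> \<subseteq> {v. (s(x := Cst c)) v \<noteq> Var v}"
      using Inf.prems(3) by auto
  qed
  have bdd: "bdd_below (range (\<lambda>c. Fs P le f \<phi> (s(x := Cst c)) p))"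
    using b by (intro bdd_belowI2[of _ 0]) auto
  have "0 \<le> (INF c. Fs P le f \<phi> (s(x := Cst c)) p)"
    using b by (intro cINF_greatest) auto
  moreover have "(INF c. Fs P le f \<phi> (s(x := Cst c)) p) \<le> 1"
    using b bdd by (intro cINF_lower2[where x=0]) auto
  ultimately show ?case by simp
qed


lemma density:
  assumes bnd: "\<forall>q\<in>P. 0 \<le> FF P le f q \<phi> \<and> FF P le f q \<phi> \<le> 1"
    and refl: "\<forall>p\<in>P. le p p"
    and trans: "\<forall>p\<in>P. \<forall>q\<in>P. \<forall>r\<in>P. le p q \<and> le q r \<longrightarrow> le p r"
    and q: "q \<in> P" and e: "0 < e"
  shows "\<exists>q'\<in>P. le q' q \<and> FF P le f q' \<phi> + FF P le f q' (Neg \<phi>) < 1 + e"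
proof -
  define g where "g = (\<lambda>q'. FF P le f q' \<phi>)"
  let ?A = "{q'\<in>P. le q' q}"
  define m where "m = (INF q'\<in>?A. g q')"
  have ne: "?A \<noteq> {}" using q refl by blast
  have bdd: "bdd_below (g ` ?A)" using bnd by (intro bdd_belowI2[of _ 0]) (auto simp: g_def)
  have "m < m + e" using e by simp
  then obtain q' where q': "q' \<in> ?A" "g q' < m + e"
    unfolding m_def using cINF_less_iff[OF ne bdd] by blast
  let ?B = "{q''\<in>P. le q'' q'}"
  have neB: "?B \<noteq> {}" using q' refl by blast
  have "m \<le> (INF q''\<in>?B. g q'')"
  proof (rule cINF_greatest[OF neB])
    fix x assume "x \<in> ?B"
    then have "x \<in> ?A" using q' q trans by blast
    then show "m \<le> g x" unfolding m_def by (rule cINF_lower[OF bdd])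
  qed
  moreover have "FF P le f q' (Neg \<phi>) = 1 - (INF q''\<in>?B. g q'')"
    by (simp add: FF_def g_def)
  ultimately have "g q' + FF P le f q' (Neg \<phi>) < 1 + e" using q'(2) by linarith
  then show ?thesis using q' unfolding g_def by blast
qed


theorem proposition2p12:
  fixes S :: "('f::countable, 'r::countable) csig"
    and LA :: "('f, 'r) frm set"
    and P :: "'p set"
    and le :: "'p \<Rightarrow> 'p \<Rightarrow> bool"
    and f :: "'p \<Rightarrow> ('f, 'r) atom \<Rightarrow> real"
  assumes "valid_sig S"
    and "countable_fragment S LA"
    and "forcing_property S LA P le f"
    and "p \<in> P"
  shows "\<exists>G. generic S LA P le f G \<and> p \<in> G"
proof -
  note fp = assms(3)[unfolded forcing_property_def]
  have refl: "\<forall>p\<in>P. le p p" using fp by blast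
  have trans: "\<forall>p\<in>P. \<forall>q\<in>P. \<forall>r\<in>P. le p q \<and> le q r \<longrightarrow> le p r" using fp by blast
  have fb0: "\<forall>p\<in>P. \<forall>a\<in>LAC_atsent S LA. 0 \<le> f p a \<and> f p a \<le> 1" using fp by blast
  have fb: "\<forall>p\<in>P. \<forall>a. Atom a \<in> LAC S LA \<and> fva a = {} \<longrightarrow> 0 \<le> f p a \<and> f p a \<le> 1"
    using fb0 by (auto simp: LAC_atsent_def)
  let ?Sent = "LAC_sent S LA"
  have bnd: "\<forall>q\<in>P. 0 \<le> FF P le f q \<phi> \<and> FF P le f q \<phi> \<le> 1" if "\<phi> \<in> ?Sent" for \<phi>
  proof
    fix q assume "q \<in> P"
    have "adm (Var :: nat \<Rightarrow> 'f trm)" by (simp add: adm_def)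
    moreover have "\<phi> \<in> LAC S LA" "fv \<phi> = {}" using that by (auto simp: LAC_sent_def)
    ultimately show "0 \<le> FF P le f q \<phi> \<and> FF P le f q \<phi> \<le> 1"
      unfolding FF_def using Fs_bound[where L="LAC S LA" and P=P and f=f and le=le, OF closedL_LAC fb refl] \<open>q \<in> P\<close> by auto
  qed
  have dense: "\<exists>q'\<in>P. le q' q \<and> FF P le f q' \<phi> + FF P le f q' (Neg \<phi>) < 1 + inverse (real (Suc k))"
    if "\<phi> \<in> ?Sent" "q \<in> P" for \<phi> q k
    by (rule density[OF bnd[OF that(1)] refl trans that(2)]) simp
  have "countable ?Sent"
    using countable_LAC[OF assms(2)] by (rule countable_subset[rotated]) (auto simp: LAC_sent_def)
  then have enum: "?Sent \<subseteq> range (from_nat_into ?Sent)" by (rule subset_range_from_nat_into)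
  define e where "e = from_nat_into ?Sent"
  define stp where "stp = (\<lambda>n q. let \<phi> = e (fst (prod_decode n)); k = snd (prod_decode n) in
     if \<phi> \<in> ?Sent \<and> q \<in> P then (SOME q'. q' \<in> P \<and> le q' q \<and>
        FF P le f q' \<phi> + FF P le f q' (Neg \<phi>) < 1 + inverse (real (Suc k))) else q)"
  define seq where "seq = rec_nat p stp"
  have seq0: "seq 0 = p" and seqS: "seq (Suc n) = stp n (seq n)" for n by (simp_all add: seq_def)
  have stpP: "q \<in> P \<Longrightarrow> stp n q \<in> P \<and> le (stp n q) q" for n q
  proof -
    assume qP: "q \<in> P"
    show ?thesis
    proof (cases "e (fst (prod_decode n)) \<in> ?Sent")
      case True
      have "\<exists>q'. q' \<in> P \<and> le q' q \<and> FF P le f q' (e (fst (prod_decode n))) + FF P le f q' (Neg (e (fst (prod_decode n)))) < 1 + inverse (real (Suc (snd (prod_decode n))))"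
        using dense[OF True qP, of "snd (prod_decode n)"] by blast
      from someI_ex[OF this]
      show ?thesis using True qP unfolding stp_def Let_def by simp
    next
      case False then show ?thesis using qP refl unfolding stp_def Let_def by simp
    qed
  qed
  have seqP: "seq n \<in> P" for n
    by (induction n) (simp_all add: seq0 seqS stpP assms(4))
  have seq_step: "le (seq (Suc n)) (seq n)" for n using stpP[OF seqP[of n]] seqS by simp
  have seq_mono: "m \<le> n \<Longrightarrow> le (seq n) (seq m)" for m n
  proof (induction n rule: dec_induct)
    case base then show ?case using refl seqP by blast
  next
    case (step n) then show ?case using trans seqP seq_step by blast
  qed
  have seq_req: "FF P le f (seq (Suc n)) (e i) + FF P le f (seq (Suc n)) (Neg (e i)) < 1 + inverse (real (Suc k))"
    if "e i \<in> ?Sent" "n = prod_encode (i, k)" for i k n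
  proof -
    have d: "prod_decode n = (i, k)" using that(2) by simp
    have "\<exists>q'. q' \<in> P \<and> le q' (seq n) \<and> FF P le f q' (e i) + FF P le f q' (Neg (e i)) < 1 + inverse (real (Suc k))"
      using dense[OF that(1) seqP[of n], of k] by blast
    from someI_ex[OF this]
    show ?thesis using that(1) seqP[of n] unfolding seqS stp_def Let_def d by simp
  qed
  define G where "G = {q\<in>P. \<exists>n. le (seq n) q}"
  have "generic S LA P le f G"
    unfolding generic_def
  proof (intro conjI)
    show "G \<noteq> {}" using seqP refl unfolding G_def by blast
    show "G \<subseteq> P" unfolding G_def by blast
    show "\<forall>p\<in>G. \<forall>q\<in>G. \<exists>r\<in>G. le r p \<and> le r q"
    proof (intro ballI)
      fix a b assume "a \<in> G" "b \<in> G"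
      then obtain n m where a: "a \<in> P" "le (seq n) a" and b: "b \<in> P" "le (seq m) b"
        unfolding G_def by blast
      let ?r = "seq (max n m)"
      have "le ?r (seq n)" "le ?r (seq m)" using seq_mono by simp_all
      then have "le ?r a" "le ?r b" using a b trans seqP by blast+
      moreover have "?r \<in> G" unfolding G_def using seqP refl by blast
      ultimately show "\<exists>r\<in>G. le r a \<and> le r b" by blast
    qed
    show "\<forall>p\<in>G. \<forall>q\<in>P. le p q \<longrightarrow> q \<in> G"
      unfolding G_def using trans seqP by blast
    show "\<forall>\<phi>\<in>?Sent. \<forall>r>1. \<exists>p\<in>G. FF P le f p \<phi> + FF P le f p (Neg \<phi>) < r"
    proof (intro ballI allI impI)
      fix \<phi> and r :: real assume \<phi>: "\<phi> \<in> ?Sent" and r: "1 < r"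
      obtain i where i: "\<phi> = e i" using enum \<phi> unfolding e_def by blast
      obtain k where k: "inverse (real (Suc k)) < r - 1" using reals_Archimedean[of "r - 1"] r by auto
      let ?n = "prod_encode (i, k)"
      have "FF P le f (seq (Suc ?n)) \<phi> + FF P le f (seq (Suc ?n)) (Neg \<phi>) < r"
        using seq_req[of i ?n k] \<phi> i k by simp
      moreover have "seq (Suc ?n) \<in> G" unfolding G_def using seqP refl by blast
      ultimately show "\<exists>p\<in>G. FF P le f p \<phi> + FF P le f p (Neg \<phi>) < r" by blast
    qed
  qed
  moreover have "p \<in> G" unfolding G_def using assms(4) seq0 refl by (metis (mono_tags, lifting) mem_Collect_eq)
  ultimately show ?thesis by blast
qed

end
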